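(* Let $\mathcal{P}'$ be a $(K',F',Z',S')$-PDA and write $g'=F'-Z'$. Let $m$ be a positive integer divisible by $6$. Then there exists a $(K,F,Z,S)$-PDA with $K=mK'$, $F=mF'$, $Z=mF'-3g'$ and $S=8S'$.
   Context: A $(K,F,Z,S)$-PDA (placement delivery array) is an $F\times K$ array whose entries are either the symbol $*$ or integers from $\{1,\dots,S\}$, each integer of $\{1,\dots,S\}$ appearing at least once, such that: (A) each column contains exactly $Z$ entries equal to $*$; (B) no integer appears more than once in any row or any column; (C) whenever $p_{j_1,k_1}=p_{j_2,k_2}=s$ is an integer with $j_1\ne j_2$ and $k_1\ne k_2$, then $p_{j_1,k_2}=p_{j_2,k_1}=*$. *)

theory Defs
  imports Main
begin

text \<open>An F x K array with rows indexed by j < F and columns by k < K.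
  The entry at (j,k) is None for the symbol * and Some s for an integer s.\<close>

definition is_pda :: "nat \<Rightarrow> nat \<Rightarrow> nat \<Rightarrow> nat \<Rightarrow> (nat \<Rightarrow> nat \<Rightarrow> nat option) \<Rightarrow> bool" where
  "is_pda K F Z S P \<longleftrightarrow>
     (\<forall>j<F. \<forall>k<K. \<forall>s. P j k = Some s \<longrightarrow> s \<in> {1..S}) \<and>
     (\<forall>s\<in>{1..S}. \<exists>j<F. \<exists>k<K. P j k = Some s) \<and>
     (\<forall>k<K. card {j. j < F \<and> P j k = None} = Z) \<and>
     (\<forall>j<F. \<forall>k1<K. \<forall>k2<K. \<forall>s. k1 \<noteq> k2 \<and> P j k1 = Some s \<longrightarrow> P j k2 \<noteq> Some s) \<and>
     (\<forall>k<K. \<forall>j1<F. \<forall>j2<F. \<forall>s. j1 \<noteq> j2 \<and> P j1 k = Some s \<longrightarrow> P j2 k \<noteq> Some s) \<and>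
     (\<forall>j1<F. \<forall>j2<F. \<forall>k1<K. \<forall>k2<K. \<forall>s.
        j1 \<noteq> j2 \<and> k1 \<noteq> k2 \<and> P j1 k1 = Some s \<and> P j2 k2 = Some s
        \<longrightarrow> P j1 k2 = None \<and> P j2 k1 = None)"

end

theory Submission
  imports Defs
begin

definition pprod :: "nat \<Rightarrow> nat \<Rightarrow> nat \<Rightarrow> (nat \<Rightarrow> nat \<Rightarrow> nat option) \<Rightarrow> (nat \<Rightarrow> nat \<Rightarrow> nat option) \<Rightarrow> nat \<Rightarrow> nat \<Rightarrow> nat option" where
  "pprod F2 K2 S2 P1 P2 j k = (case P1 (j div F2) (k div K2) of None \<Rightarrow> None
     | Some a \<Rightarrow> (case P2 (j mod F2) (k mod K2) of None \<Rightarrow> None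
     | Some b \<Rightarrow> Some ((a - 1) * S2 + b)))"

lemma pprod_Some:
  "pprod F2 K2 S2 P1 P2 j k = Some s \<longleftrightarrow>
   (\<exists>a b. P1 (j div F2) (k div K2) = Some a \<and> P2 (j mod F2) (k mod K2) = Some b \<and> s = (a - 1) * S2 + b)"
  by (auto simp: pprod_def split: option.splits)

lemma pprod_None:
  "pprod F2 K2 S2 P1 P2 j k = None \<longleftrightarrow>
   (P1 (j div F2) (k div K2) = None \<or> P2 (j mod F2) (k mod K2) = None)"
  by (auto simp: pprod_def split: option.splits)

lemma dm_aux:
  fixes x y n :: nat
  assumes "y < n"
  shows "(x * n + y) div n = x \<and> (x * n + y) mod n = y"
  using assms by simp

lemma enc_inj:
  fixes a a' b b' S2 :: nat
  assumes "1 \<le> b" "b \<le> S2" "1 \<le> b'" "b' \<le> S2"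
    and "(a - 1) * S2 + b = (a' - 1) * S2 + b'"
  shows "a - 1 = a' - 1 \<and> b = b'"
proof -
  have e: "(a - 1) * S2 + (b - 1) = (a' - 1) * S2 + (b' - 1)" using assms by linarith
  have d1: "((a - 1) * S2 + (b - 1)) div S2 = a - 1" "((a - 1) * S2 + (b - 1)) mod S2 = b - 1"
    using dm_aux[of "b - 1" S2 "a - 1"] assms(1,2) by auto
  have d2: "((a' - 1) * S2 + (b' - 1)) div S2 = a' - 1" "((a' - 1) * S2 + (b' - 1)) mod S2 = b' - 1"
    using dm_aux[of "b' - 1" S2 "a' - 1"] assms(3,4) by auto
  have m1: "True" "True" by auto
  have "a - 1 = a' - 1" by (metis d1(1) d2(1) e)
  moreover have "b - 1 = b' - 1" by (metis d1(2) d2(2) e)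
  ultimately show ?thesis using assms by simp
qed

lemma pda_c2:
  assumes "is_pda K F Z S P" "s \<in> {1..S}"
  shows "\<exists>j<F. \<exists>k<K. P j k = Some s"
  using assms(1)[unfolded is_pda_def, THEN conjunct2, THEN conjunct1] assms(2) by (rule bspec)

lemma pda_c3:
  assumes "is_pda K F Z S P" "k < K"
  shows "card {j. j < F \<and> P j k = None} = Z"
  using assms(1)[unfolded is_pda_def, THEN conjunct2, THEN conjunct2, THEN conjunct1] assms(2) by blast

lemma pda_c4:
  assumes "is_pda K F Z S P"
  shows "\<forall>j<F. \<forall>k1<K. \<forall>k2<K. \<forall>s. k1 \<noteq> k2 \<and> P j k1 = Some s \<longrightarrow> P j k2 \<noteq> Some s"
  using assms[unfolded is_pda_def, THEN conjunct2, THEN conjunct2, THEN conjunct2, THEN conjunct1] .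

lemma pda_c5:
  assumes "is_pda K F Z S P"
  shows "\<forall>k<K. \<forall>j1<F. \<forall>j2<F. \<forall>s. j1 \<noteq> j2 \<and> P j1 k = Some s \<longrightarrow> P j2 k \<noteq> Some s"
  using assms[unfolded is_pda_def, THEN conjunct2, THEN conjunct2, THEN conjunct2, THEN conjunct2, THEN conjunct1] .

lemma pda_c6:
  assumes "is_pda K F Z S P"
  shows "\<forall>j1<F. \<forall>j2<F. \<forall>k1<K. \<forall>k2<K. \<forall>s.
        j1 \<noteq> j2 \<and> k1 \<noteq> k2 \<and> P j1 k1 = Some s \<and> P j2 k2 = Some s
        \<longrightarrow> P j1 k2 = None \<and> P j2 k1 = None"
  using assms[unfolded is_pda_def, THEN conjunct2, THEN conjunct2, THEN conjunct2, THEN conjunct2, THEN conjunct2] .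

lemma pda_pair:
  assumes "is_pda K F Z S P" "j1 < F" "j2 < F" "k1 < K" "k2 < K"
    "P j1 k1 = Some s" "P j2 k2 = Some s"
  shows "(j1 = j2 \<and> k1 = k2) \<or> (P j1 k2 = None \<and> P j2 k1 = None)"
proof (cases "j1 = j2")
  case True
  show ?thesis
  proof (cases "k1 = k2")
    case False
    then have "P j1 k2 \<noteq> Some s" using pda_c4[OF assms(1)] assms(2,4,5,6) by blast
    then show ?thesis using True assms(7) by simp
  qed (use True in simp)
next
  case False
  show ?thesis
  proof (cases "k1 = k2")
    case True
    then have "P j2 k1 \<noteq> Some s" using pda_c5[OF assms(1)] assms(2,3,4,6) False by blast
    then show ?thesis using True assms(7) by simp
  next
    case False2: False
    then show ?thesis using pda_c6[OF assms(1)] assms(2-7) False by blast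
  qed
qed

lemma pda_range:
  assumes "is_pda K F Z S P" "j < F" "k < K" "P j k = Some s"
  shows "1 \<le> s \<and> s \<le> S"
  using assms(1)[unfolded is_pda_def, THEN conjunct1] assms(2-4) by auto

lemma card_part:
  "card {j. j < (n::nat) \<and> Q j} + card {j. j < n \<and> \<not> Q j} = n"
proof -
  have "{j. j < n \<and> Q j} \<union> {j. j < n \<and> \<not> Q j} = {..<n}" by auto
  moreover have "card ({j. j < n \<and> Q j} \<union> {j. j < n \<and> \<not> Q j}) =
     card {j. j < n \<and> Q j} + card {j. j < n \<and> \<not> Q j}"
    by (rule card_Un_disjoint) auto
  ultimately show ?thesis by simp
qed

lemma divmod_eq:
  fixes j j' F2 :: nat
  assumes "j div F2 = j' div F2" "j mod F2 = j' mod F2"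
  shows "j = j'"
  by (metis assms div_mult_mod_eq)

lemma lt_prod:
  fixes a b F1 F2 :: nat
  assumes "a < F1" "b < F2"
  shows "a * F2 + b < F1 * F2"
proof -
  have "(a + 1) * F2 \<le> F1 * F2" using assms by (intro mult_le_mono1) simp
  thus ?thesis using assms by simp
qed

lemma pprod_pda:
  assumes P1: "is_pda K1 F1 Z1 S1 P1" and P2: "is_pda K2 F2 Z2 S2 P2"
  shows "is_pda (K1 * K2) (F1 * F2) (F1 * F2 - (F1 - Z1) * (F2 - Z2)) (S1 * S2) (pprod F2 K2 S2 P1 P2)"
proof -
  let ?P = "pprod F2 K2 S2 P1 P2"
  have ix: "j div F2 < F1" "j mod F2 < F2" if "j < F1 * F2" for j
  proof -
    have "0 < F2" using that by (cases "F2 = 0") auto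
    then show "j mod F2 < F2" by simp
    show "j div F2 < F1" using that by (intro less_mult_imp_div_less) simp
  qed
  have kx: "k div K2 < K1" "k mod K2 < K2" if "k < K1 * K2" for k
  proof -
    have "0 < K2" using that by (cases "K2 = 0") auto
    then show "k mod K2 < K2" by simp
    show "k div K2 < K1" using that by (intro less_mult_imp_div_less) simp
  qed
  have dec: "\<exists>a b. P1 (j div F2) (k div K2) = Some a \<and> P2 (j mod F2) (k mod K2) = Some b
      \<and> s = (a - 1) * S2 + b \<and> 1 \<le> a \<and> a \<le> S1 \<and> 1 \<le> b \<and> b \<le> S2"
    if h1: "j < F1 * F2" and h2: "k < K1 * K2" and h3: "?P j k = Some s" for j k s
  proof -
    obtain a b where ab: "P1 (j div F2) (k div K2) = Some a" "P2 (j mod F2) (k mod K2) = Some b"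
      "s = (a - 1) * S2 + b" using h3 by (auto simp: pprod_Some)
    have "1 \<le> a \<and> a \<le> S1" using pda_range[OF P1 ix(1)[OF h1] kx(1)[OF h2] ab(1)] .
    moreover have "1 \<le> b \<and> b \<le> S2" using pda_range[OF P2 ix(2)[OF h1] kx(2)[OF h2] ab(2)] .
    ultimately show ?thesis using ab by blast
  qed
  have C1: "\<forall>j<F1 * F2. \<forall>k<K1 * K2. \<forall>s. ?P j k = Some s \<longrightarrow> s \<in> {1..S1 * S2}"
  proof (intro allI impI)
    fix j k s assume h: "j < F1 * F2" "k < K1 * K2" "?P j k = Some s"
    obtain a b where ab: "s = (a - 1) * S2 + b" "1 \<le> a" "a \<le> S1" "1 \<le> b" "b \<le> S2"
      using dec[OF h] by blast
    have "(a - 1) * S2 \<le> (S1 - 1) * S2" using ab by (intro mult_le_mono1) simp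
    moreover have "(S1 - 1) * S2 + S2 = S1 * S2" using ab by (cases S1) auto
    ultimately have "(a - 1) * S2 + b \<le> S1 * S2" using ab(5) by linarith
    then show "s \<in> {1..S1 * S2}" using ab(1,4) by simp
  qed
  have C2: "\<forall>s\<in>{1..S1 * S2}. \<exists>j<F1 * F2. \<exists>k<K1 * K2. ?P j k = Some s"
  proof
    fix s assume s: "s \<in> {1..S1 * S2}"
    then have S2p: "0 < S2" by (cases "S2 = 0") auto
    define a where "a = (s - 1) div S2 + 1"
    define b where "b = (s - 1) mod S2 + 1"
    have "(s - 1) div S2 < S1" using s S2p by (auto simp: div_less_iff_less_mult)
    then have a: "a \<in> {1..S1}" unfolding a_def by auto
    have "(s - 1) mod S2 < S2" using S2p by simp
    then have b: "b \<in> {1..S2}" unfolding b_def by auto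
    have sab: "s = (a - 1) * S2 + b" unfolding a_def b_def using s div_mult_mod_eq[of "s - 1" S2] by simp
    obtain j1 k1 where jk1: "j1 < F1" "k1 < K1" "P1 j1 k1 = Some a"
      using pda_c2[OF P1 a] by blast
    obtain j2 k2 where jk2: "j2 < F2" "k2 < K2" "P2 j2 k2 = Some b"
      using pda_c2[OF P2 b] by blast
    have "j1 * F2 + j2 < F1 * F2" by (rule lt_prod) (use jk1 jk2 in auto)
    moreover have "k1 * K2 + k2 < K1 * K2" by (rule lt_prod) (use jk1 jk2 in auto)
    moreover have "?P (j1 * F2 + j2) (k1 * K2 + k2) = Some s"
      using jk1 jk2 sab by (simp add: pprod_def)
    ultimately show "\<exists>j<F1 * F2. \<exists>k<K1 * K2. ?P j k = Some s" by blast
  qed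
  have C3: "\<forall>k<K1 * K2. card {j. j < F1 * F2 \<and> ?P j k = None} = F1 * F2 - (F1 - Z1) * (F2 - Z2)"
  proof (intro allI impI)
    fix k assume k: "k < K1 * K2"
    let ?A = "{a. a < F1 \<and> P1 a (k div K2) \<noteq> None}"
    let ?B = "{b. b < F2 \<and> P2 b (k mod K2) \<noteq> None}"
    let ?N = "{j. j < F1 * F2 \<and> ?P j k \<noteq> None}"
    have cA: "card ?A = F1 - Z1"
    proof -
      have "card {a. a < F1 \<and> P1 a (k div K2) = None} = Z1" using pda_c3[OF P1 kx(1)[OF k]] .
      moreover have "card ?A + card {a. a < F1 \<and> \<not> P1 a (k div K2) \<noteq> None} = F1" by (rule card_part)
      ultimately show ?thesis by simp
    qed
    have cB: "card ?B = F2 - Z2"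
    proof -
      have "card {b. b < F2 \<and> P2 b (k mod K2) = None} = Z2" using pda_c3[OF P2 kx(2)[OF k]] .
      moreover have "card ?B + card {b. b < F2 \<and> \<not> P2 b (k mod K2) \<noteq> None} = F2" by (rule card_part)
      ultimately show ?thesis by simp
    qed
    have img: "?N = (\<lambda>(a, b). a * F2 + b) ` (?A \<times> ?B)"
    proof
      show "?N \<subseteq> (\<lambda>(a, b). a * F2 + b) ` (?A \<times> ?B)"
      proof
        fix j assume j: "j \<in> ?N"
        then have jl: "j < F1 * F2" and "?P j k \<noteq> None" by auto
        then have "P1 (j div F2) (k div K2) \<noteq> None" "P2 (j mod F2) (k mod K2) \<noteq> None"
          by (simp_all add: pprod_None)
        then have "(j div F2, j mod F2) \<in> ?A \<times> ?B" using ix[OF jl] by auto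
        moreover have "j = (\<lambda>(a, b). a * F2 + b) (j div F2, j mod F2)" by simp
        ultimately show "j \<in> (\<lambda>(a, b). a * F2 + b) ` (?A \<times> ?B)" by blast
      qed
    next
      show "(\<lambda>(a, b). a * F2 + b) ` (?A \<times> ?B) \<subseteq> ?N"
      proof
        fix j assume "j \<in> (\<lambda>(a, b). a * F2 + b) ` (?A \<times> ?B)"
        then obtain p where p: "p \<in> ?A \<times> ?B" "j = (\<lambda>(a, b). a * F2 + b) p" by (rule imageE)
        obtain a b where pab: "p = (a, b)" by (cases p)
        have ab: "a \<in> ?A" "b \<in> ?B" "j = a * F2 + b" using p pab by auto
        have "j < F1 * F2" using ab lt_prod[of a F1 b F2] by auto
        moreover have "j div F2 = a" "j mod F2 = b" using ab by auto
        ultimately show "j \<in> ?N" using ab(1,2) by (simp add: pprod_None)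
      qed
    qed
    have inj: "inj_on (\<lambda>(a, b). a * F2 + b) (?A \<times> ?B)"
    proof (rule inj_onI, clarsimp)
      fix a b a' b' assume "b < F2" "b' < F2" "a * F2 + b = a' * F2 + b'"
      then show "a = a' \<and> b = b'"
        using dm_aux[of b F2 a] dm_aux[of b' F2 a'] by metis
    qed
    have cN: "card ?N = (F1 - Z1) * (F2 - Z2)"
      using img card_image[OF inj] cA cB by (simp add: card_cartesian_product)
    have "card {j. j < F1 * F2 \<and> ?P j k = None} + card ?N = F1 * F2"
      using card_part[of "F1 * F2" "\<lambda>j. ?P j k = None"] by simp
    then show "card {j. j < F1 * F2 \<and> ?P j k = None} = F1 * F2 - (F1 - Z1) * (F2 - Z2)"
      using cN by simp
  qed
  have pair: "(j1 = j2 \<and> k1 = k2) \<or> (?P j1 k2 = None \<and> ?P j2 k1 = None)"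
    if h: "j1 < F1 * F2" "j2 < F1 * F2" "k1 < K1 * K2" "k2 < K1 * K2" "?P j1 k1 = Some s" "?P j2 k2 = Some s"
    for j1 j2 k1 k2 s
  proof -
    obtain a b where ab: "P1 (j1 div F2) (k1 div K2) = Some a" "P2 (j1 mod F2) (k1 mod K2) = Some b"
      "s = (a - 1) * S2 + b" "1 \<le> a" "a \<le> S1" "1 \<le> b" "b \<le> S2" using dec[OF h(1,3,5)] by blast
    obtain a' b' where ab': "P1 (j2 div F2) (k2 div K2) = Some a'" "P2 (j2 mod F2) (k2 mod K2) = Some b'"
      "s = (a' - 1) * S2 + b'" "1 \<le> a'" "a' \<le> S1" "1 \<le> b'" "b' \<le> S2" using dec[OF h(2,4,6)] by blast
    have "a - 1 = a' - 1 \<and> b = b'" using enc_inj ab ab' by metis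
    then have eq: "a = a'" "b = b'" using ab ab' by auto
    have p1: "(j1 div F2 = j2 div F2 \<and> k1 div K2 = k2 div K2) \<or>
        (P1 (j1 div F2) (k2 div K2) = None \<and> P1 (j2 div F2) (k1 div K2) = None)"
      by (rule pda_pair[OF P1 ix(1)[OF h(1)] ix(1)[OF h(2)] kx(1)[OF h(3)] kx(1)[OF h(4)] ab(1)])
        (use ab' eq in simp)
    have p2: "(j1 mod F2 = j2 mod F2 \<and> k1 mod K2 = k2 mod K2) \<or>
        (P2 (j1 mod F2) (k2 mod K2) = None \<and> P2 (j2 mod F2) (k1 mod K2) = None)"
      by (rule pda_pair[OF P2 ix(2)[OF h(1)] ix(2)[OF h(2)] kx(2)[OF h(3)] kx(2)[OF h(4)] ab(2)])
        (use ab' eq in simp)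
    show ?thesis
    proof (cases "(P1 (j1 div F2) (k2 div K2) = None \<and> P1 (j2 div F2) (k1 div K2) = None) \<or>
        (P2 (j1 mod F2) (k2 mod K2) = None \<and> P2 (j2 mod F2) (k1 mod K2) = None)")
      case True
      then show ?thesis by (auto simp: pprod_None)
    next
      case False
      then have "j1 div F2 = j2 div F2 \<and> k1 div K2 = k2 div K2" "j1 mod F2 = j2 mod F2 \<and> k1 mod K2 = k2 mod K2"
        using p1 p2 by auto
      then show ?thesis using divmod_eq by blast
    qed
  qed
  have C4: "\<forall>j<F1 * F2. \<forall>k1<K1 * K2. \<forall>k2<K1 * K2. \<forall>s. k1 \<noteq> k2 \<and> ?P j k1 = Some s \<longrightarrow> ?P j k2 \<noteq> Some s"
  proof (intro allI impI notI)
    fix j k1 k2 s assume "j < F1 * F2" "k1 < K1 * K2" "k2 < K1 * K2" "k1 \<noteq> k2 \<and> ?P j k1 = Some s" "?P j k2 = Some s"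
    then show False using pair[of j j k1 k2 s] by auto
  qed
  have C5: "\<forall>k<K1 * K2. \<forall>j1<F1 * F2. \<forall>j2<F1 * F2. \<forall>s. j1 \<noteq> j2 \<and> ?P j1 k = Some s \<longrightarrow> ?P j2 k \<noteq> Some s"
  proof (intro allI impI notI)
    fix k j1 j2 s assume "k < K1 * K2" "j1 < F1 * F2" "j2 < F1 * F2" "j1 \<noteq> j2 \<and> ?P j1 k = Some s" "?P j2 k = Some s"
    then show False using pair[of j1 j2 k k s] by auto
  qed
  have C6: "\<forall>j1<F1 * F2. \<forall>j2<F1 * F2. \<forall>k1<K1 * K2. \<forall>k2<K1 * K2. \<forall>s.
        j1 \<noteq> j2 \<and> k1 \<noteq> k2 \<and> ?P j1 k1 = Some s \<and> ?P j2 k2 = Some s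
        \<longrightarrow> ?P j1 k2 = None \<and> ?P j2 k1 = None"
    using pair by blast
  show ?thesis unfolding is_pda_def by (intro conjI C1 C2 C3 C4 C5 C6)
qed

definition q6 :: "nat \<Rightarrow> nat \<Rightarrow> nat option" where
  "q6 j k = (if j < 6 \<and> k < 6 then [[Some 3, None, None, Some 4, None, Some 7], [None, Some 1, Some 3, None, Some 7, None], [Some 1, None, Some 5, None, None, None], [None, Some 5, None, Some 2, None, Some 8], [None, None, None, Some 1, Some 5, Some 6], [Some 2, Some 4, Some 6, None, Some 8, None]] ! j ! k else None)"

lemma all6: "(\<forall>j<(6::nat). P j) \<longleftrightarrow> P 0 \<and> P 1 \<and> P 2 \<and> P 3 \<and> P 4 \<and> P 5"
  by (simp add: All_less_Suc eval_nat_numeral conj_ac)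
lemma ex6: "(\<exists>j<(6::nat). P j) \<longleftrightarrow> P 0 \<or> P 1 \<or> P 2 \<or> P 3 \<or> P 4 \<or> P 5"
  by (simp add: Ex_less_Suc eval_nat_numeral disj_ac)
lemma ball8: "(\<forall>s\<in>{1..(8::nat)}. P s) \<longleftrightarrow> P 1 \<and> P 2 \<and> P 3 \<and> P 4 \<and> P 5 \<and> P 6 \<and> P 7 \<and> P 8"
proof -
  have "{1..(8::nat)} = {1,2,3,4,5,6,7,8}" by auto
  then show ?thesis by simp
qed

lemma upt6: "[0..<6] = [0,1,2,3,4,(5::nat)]"
  by (simp add: eval_nat_numeral upt_Suc)

lemma card6: "card {j. j < (6::nat) \<and> Q j} = length (filter Q [0,1,2,3,4,5])"
proof -
  have "{j. j < (6::nat) \<and> Q j} = set (filter Q [0..<6])" by auto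
  note this[unfolded upt6]
  then show ?thesis unfolding upt6[symmetric] by (simp only: distinct_card[OF distinct_filter[OF distinct_upt]])
qed

lemma q6_vals: "q6 0 0 = Some 3" "q6 0 1 = None" "q6 0 2 = None" "q6 0 3 = Some 4" "q6 0 4 = None" "q6 0 5 = Some 7" "q6 1 0 = None" "q6 1 1 = Some 1" "q6 1 2 = Some 3" "q6 1 3 = None" "q6 1 4 = Some 7" "q6 1 5 = None" "q6 2 0 = Some 1" "q6 2 1 = None" "q6 2 2 = Some 5" "q6 2 3 = None" "q6 2 4 = None" "q6 2 5 = None" "q6 3 0 = None" "q6 3 1 = Some 5" "q6 3 2 = None" "q6 3 3 = Some 2" "q6 3 4 = None" "q6 3 5 = Some 8" "q6 4 0 = None" "q6 4 1 = None" "q6 4 2 = None" "q6 4 3 = Some 1" "q6 4 4 = Some 5" "q6 4 5 = Some 6" "q6 5 0 = Some 2" "q6 5 1 = Some 4" "q6 5 2 = Some 6" "q6 5 3 = None" "q6 5 4 = Some 8" "q6 5 5 = None"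
  by (simp_all add: q6_def)

lemma q6_pda: "is_pda 6 6 3 8 q6"
proof -
  have c1: "\<forall>j<6. \<forall>k<6. \<forall>s. q6 j k = Some s \<longrightarrow> s \<in> {1..8}"
    unfolding all6 by (simp add: q6_vals q6_vals[unfolded One_nat_def])
  have c2: "\<forall>s\<in>{1..8}. \<exists>j<6. \<exists>k<6. q6 j k = Some s"
    unfolding ball8 ex6 by (simp add: q6_vals q6_vals[unfolded One_nat_def])
  have c3: "\<forall>k<6. card {j. j < 6 \<and> q6 j k = None} = 3"
    unfolding all6 card6 by (simp add: q6_vals q6_vals[unfolded One_nat_def])
  have c4: "\<forall>j<6. \<forall>k1<6. \<forall>k2<6. \<forall>s. k1 \<noteq> k2 \<and> q6 j k1 = Some s \<longrightarrow> q6 j k2 \<noteq> Some s"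
    unfolding all6 by (simp add: q6_vals q6_vals[unfolded One_nat_def])
  have c5: "\<forall>k<6. \<forall>j1<6. \<forall>j2<6. \<forall>s. j1 \<noteq> j2 \<and> q6 j1 k = Some s \<longrightarrow> q6 j2 k \<noteq> Some s"
    unfolding all6 by (simp add: q6_vals q6_vals[unfolded One_nat_def])
  have c6: "\<forall>j1<6. \<forall>j2<6. \<forall>k1<6. \<forall>k2<6. \<forall>s.
        j1 \<noteq> j2 \<and> k1 \<noteq> k2 \<and> q6 j1 k1 = Some s \<and> q6 j2 k2 = Some s
        \<longrightarrow> q6 j1 k2 = None \<and> q6 j2 k1 = None"
    unfolding all6 by (simp add: q6_vals q6_vals[unfolded One_nat_def])
  show ?thesis unfolding is_pda_def by (intro conjI c1 c2 c3 c4 c5 c6)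
qed

definition diag :: "nat \<Rightarrow> nat \<Rightarrow> nat option" where
  "diag j k = (if j = k then Some 1 else None)"

lemma diag_pda:
  assumes "0 < t"
  shows "is_pda t t (t - 1) 1 diag"
proof -
  have c3: "card {j. j < t \<and> diag j k = None} = t - 1" if "k < t" for k
  proof -
    have "{j. j < t \<and> diag j k = None} = {..<t} - {k}" by (auto simp: diag_def)
    then show ?thesis using that by simp
  qed
  show ?thesis unfolding is_pda_def
    using assms c3 by (auto simp: diag_def)
qed

theorem theorem5p2:
  fixes K' F' Z' S' m :: nat and P' :: "nat \<Rightarrow> nat \<Rightarrow> nat option"
  assumes "is_pda K' F' Z' S' P'"
    and "0 < m" and "6 dvd m"
  shows "\<exists>P. is_pda (m * K') (m * F') (m * F' - 3 * (F' - Z')) (8 * S') P"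
proof -
  obtain t where t: "m = 6 * t" using assms(3) by blast
  then have tp: "0 < t" using assms(2) by simp
  have Q: "is_pda (6 * t) (6 * t) (6 * t - (6 - 3) * (t - (t - 1))) (8 * 1) (pprod t t 1 q6 diag)"
    by (rule pprod_pda[OF q6_pda diag_pda[OF tp]])
  have e1: "6 * t - (6 - 3) * (t - (t - 1)) = m - 3" using tp t by simp
  have Q': "is_pda m m (m - 3) 8 (pprod t t 1 q6 diag)" using Q e1 t by simp
  have R: "is_pda (m * K') (m * F') (m * F' - (m - (m - 3)) * (F' - Z')) (8 * S')
      (pprod F' K' S' (pprod t t 1 q6 diag) P')"
    by (rule pprod_pda[OF Q' assms(1)])
  have "m - (m - 3) = 3" using t tp by simp
  then show ?thesis using R by auto
qed

end
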